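(* Let $G$ be a locally compact group acting without inversions on a locally finite regular tree $T$, and let $L$ be a geodesic line in $T$ satisfying: (i) for every geodesic segment $[x,y]$ of finite length in $T$ there exists $g\in G$ with $[gx,gy]\subset L$; (ii) the set-wise stabilizer $H$ of $L$ in $G$ acts transitively on the geometric edges of $L$. Then for every $n\ge 0$, restriction to $L^{n+1}$ induces an isomorphism $$\ell^\infty_{\mathcal A}(T^{n+1},\mathbb{R})^G\;\xrightarrow{\ \cong\ }\;\ell^\infty_{\mathrm{alt}}(L^{n+1},\mathbb{R})^H .$$
   Context: Identify $T$ and $L$ with their vertex sets. A tuple $(x_0,\ldots,x_n)$ of vertices is aligned if all $x_i$ lie on a common geodesic segment of $T$. $\ell^\infty_{\mathcal A}(T^{n+1},\mathbb{R})$ denotes the space of bounded alternating functions $T^{n+1}\to\mathbb{R}$ (i.e. $f(x_{\sigma(0)},\ldots,x_{\sigma(n)})=\mathrm{sgn}(\sigma)f(x_0,\ldots,x_n)$) supported on aligned tuples; $\ell^\infty_{\mathrm{alt}}(L^{n+1},\mathbb{R})$ denotes bounded alternating functions on $L^{n+1}$. The superscripts $G$, $H$ denote invariants under the diagonal action. "Without inversions" means no element swaps the endpoints of an edge. *)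

theory Defs
  imports Complex_Main "HOL-Algebra.Group" "HOL-Combinatorics.Permutations"
begin

definition is_path :: "('v \<Rightarrow> 'v \<Rightarrow> bool) \<Rightarrow> 'v list \<Rightarrow> 'v \<Rightarrow> 'v \<Rightarrow> bool" where
  "is_path E p x y \<longleftrightarrow> p \<noteq> [] \<and> hd p = x \<and> last p = y \<and> distinct p \<and>
     (\<forall>i. Suc i < length p \<longrightarrow> E (p ! i) (p ! Suc i))"

definition is_tree :: "'v set \<Rightarrow> ('v \<Rightarrow> 'v \<Rightarrow> bool) \<Rightarrow> bool" where
  "is_tree V E \<longleftrightarrow> (\<forall>x y. E x y \<longrightarrow> x \<in> V \<and> y \<in> V \<and> E y x \<and> x \<noteq> y) \<and>
     (\<forall>x\<in>V. \<forall>y\<in>V. \<exists>!p. is_path E p x y)"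

definition locally_finite_regular :: "'v set \<Rightarrow> ('v \<Rightarrow> 'v \<Rightarrow> bool) \<Rightarrow> bool" where
  "locally_finite_regular V E \<longleftrightarrow>
     (\<forall>v\<in>V. finite {w. E v w}) \<and> (\<exists>d. \<forall>v\<in>V. card {w. E v w} = d)"

text \<open>Vertex set of the geodesic segment [x,y] (the unique simple path).\<close>
definition segment :: "('v \<Rightarrow> 'v \<Rightarrow> bool) \<Rightarrow> 'v \<Rightarrow> 'v \<Rightarrow> 'v set" where
  "segment E x y = \<Union> {set p | p. is_path E p x y}"

definition geodesic_line :: "'v set \<Rightarrow> ('v \<Rightarrow> 'v \<Rightarrow> bool) \<Rightarrow> (int \<Rightarrow> 'v) \<Rightarrow> bool" where
  "geodesic_line V E l \<longleftrightarrow> inj l \<and> range l \<subseteq> V \<and> (\<forall>i. E (l i) (l (i + 1)))"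

definition tree_action :: "('g, 'b) monoid_scheme \<Rightarrow> 'v set \<Rightarrow> ('v \<Rightarrow> 'v \<Rightarrow> bool)
    \<Rightarrow> ('g \<Rightarrow> 'v \<Rightarrow> 'v) \<Rightarrow> bool" where
  "tree_action G V E phi \<longleftrightarrow> group G \<and>
     (\<forall>g\<in>carrier G. bij_betw (phi g) V V \<and> (\<forall>x\<in>V. \<forall>y\<in>V. E (phi g x) (phi g y) \<longleftrightarrow> E x y)) \<and>
     (\<forall>x\<in>V. phi \<one>\<^bsub>G\<^esub> x = x) \<and>
     (\<forall>g\<in>carrier G. \<forall>h\<in>carrier G. \<forall>x\<in>V. phi (g \<otimes>\<^bsub>G\<^esub> h) x = phi g (phi h x))"

definition without_inversions :: "('g, 'b) monoid_scheme \<Rightarrow> ('v \<Rightarrow> 'v \<Rightarrow> bool)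
    \<Rightarrow> ('g \<Rightarrow> 'v \<Rightarrow> 'v) \<Rightarrow> bool" where
  "without_inversions G E phi \<longleftrightarrow>
     \<not> (\<exists>g\<in>carrier G. \<exists>x y. E x y \<and> phi g x = y \<and> phi g y = x)"

definition setwise_stabilizer :: "('g, 'b) monoid_scheme \<Rightarrow> ('g \<Rightarrow> 'v \<Rightarrow> 'v) \<Rightarrow> 'v set \<Rightarrow> 'g set" where
  "setwise_stabilizer G phi L = {g \<in> carrier G. phi g ` L = L}"

text \<open>Functions on (n+1)-tuples of elements of X are represented as functions on lists,
  vanishing off the set of lists of length n+1 with entries in X.\<close>
definition tuples :: "nat \<Rightarrow> 'v set \<Rightarrow> 'v list set" where
  "tuples n X = {xs. length xs = Suc n \<and> set xs \<subseteq> X}"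

definition bounded_fun :: "('a \<Rightarrow> real) \<Rightarrow> bool" where
  "bounded_fun f \<longleftrightarrow> (\<exists>C. \<forall>x. \<bar>f x\<bar> \<le> C)"

definition alternating :: "nat \<Rightarrow> 'v set \<Rightarrow> ('v list \<Rightarrow> real) \<Rightarrow> bool" where
  "alternating n X f \<longleftrightarrow> (\<forall>xs\<in>tuples n X. \<forall>\<sigma>. \<sigma> permutes {..<Suc n} \<longrightarrow>
      f (map (\<lambda>i. xs ! \<sigma> i) [0..<Suc n]) = of_int (sign \<sigma>) * f xs)"

definition aligned :: "('v \<Rightarrow> 'v \<Rightarrow> bool) \<Rightarrow> 'v set \<Rightarrow> 'v list \<Rightarrow> bool" where
  "aligned E V xs \<longleftrightarrow> (\<exists>a\<in>V. \<exists>b\<in>V. set xs \<subseteq> segment E a b)"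

definition invariant :: "nat \<Rightarrow> 'v set \<Rightarrow> 'g set \<Rightarrow> ('g \<Rightarrow> 'v \<Rightarrow> 'v) \<Rightarrow> ('v list \<Rightarrow> real) \<Rightarrow> bool" where
  "invariant n X H phi f \<longleftrightarrow> (\<forall>h\<in>H. \<forall>xs\<in>tuples n X. f (map (phi h) xs) = f xs)"

definition linf_aligned_inv :: "nat \<Rightarrow> 'v set \<Rightarrow> ('v \<Rightarrow> 'v \<Rightarrow> bool) \<Rightarrow> 'g set
    \<Rightarrow> ('g \<Rightarrow> 'v \<Rightarrow> 'v) \<Rightarrow> ('v list \<Rightarrow> real) set" where
  "linf_aligned_inv n V E G phi = {f. (\<forall>xs. xs \<notin> tuples n V \<longrightarrow> f xs = 0) \<and> bounded_fun f \<and>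
      alternating n V f \<and> (\<forall>xs\<in>tuples n V. f xs \<noteq> 0 \<longrightarrow> aligned E V xs) \<and> invariant n V G phi f}"

definition linf_alt_inv :: "nat \<Rightarrow> 'v set \<Rightarrow> 'g set
    \<Rightarrow> ('g \<Rightarrow> 'v \<Rightarrow> 'v) \<Rightarrow> ('v list \<Rightarrow> real) set" where
  "linf_alt_inv n L H phi = {f. (\<forall>xs. xs \<notin> tuples n L \<longrightarrow> f xs = 0) \<and> bounded_fun f \<and>
      alternating n L f \<and> invariant n L H phi f}"

definition restrict_tuples :: "nat \<Rightarrow> 'v set \<Rightarrow> ('v list \<Rightarrow> real) \<Rightarrow> ('v list \<Rightarrow> real)" where
  "restrict_tuples n L f = (\<lambda>xs. if xs \<in> tuples n L then f xs else 0)"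

end

theory Submission
  imports Defs
begin

lemma affine_interval:
  fixes \<psi> :: "int \<Rightarrow> int" and a b :: int
  assumes stp: "\<And>i. a \<le> i \<Longrightarrow> i < b \<Longrightarrow> \<bar>\<psi> (i+1) - \<psi> i\<bar> = 1"
    and inj: "\<And>i j. a \<le> i \<Longrightarrow> i \<le> b \<Longrightarrow> a \<le> j \<Longrightarrow> j \<le> b \<Longrightarrow> \<psi> i = \<psi> j \<Longrightarrow> i = j"
    and ai: "a \<le> i" and ib: "i \<le> b"
  shows "\<psi> i = \<psi> a + (\<psi> (a+1) - \<psi> a) * (i - a)"
proof -
  have const: "j < b \<longrightarrow> \<psi> (j+1) - \<psi> j = \<psi> (a+1) - \<psi> a" if "a \<le> j" for j
    using that
  proof (induction j rule: int_ge_induct)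
    case base then show ?case by simp
  next
    case (step j)
    show ?case
    proof
      assume jb: "j + 1 < b"
      have IH: "\<psi> (j+1) - \<psi> j = \<psi> (a+1) - \<psi> a" using step jb by simp
      have s1: "\<bar>\<psi> (j+1) - \<psi> j\<bar> = 1" using stp[of j] step jb by simp
      have s2: "\<bar>\<psi> (j+1+1) - \<psi> (j+1)\<bar> = 1" using stp[of "j+1"] step jb by simp
      have ne: "\<psi> (j+1+1) \<noteq> \<psi> j" 
      proof
        assume "\<psi> (j+1+1) = \<psi> j"
        from inj[OF _ _ _ _ this] step jb show False by simp
      qed
      show "\<psi> (j+1+1) - \<psi> (j+1) = \<psi> (a+1) - \<psi> a" using IH s1 s2 ne by linarith
    qed
  qed
  have "j \<le> b \<longrightarrow> \<psi> j = \<psi> a + (\<psi> (a+1) - \<psi> a) * (j - a)" if "a \<le> j" for j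
    using that
  proof (induction j rule: int_ge_induct)
    case base then show ?case by simp
  next
    case (step j)
    show ?case
    proof
      assume jb: "j + 1 \<le> b"
      have e1: "\<psi> (j+1) - \<psi> j = \<psi> (a+1) - \<psi> a" using const[of j] step jb by simp
      have e2: "\<psi> j = \<psi> a + (\<psi> (a+1) - \<psi> a) * (j - a)" using step jb by simp
      have "\<psi> (j+1) = \<psi> a + (\<psi> (a+1) - \<psi> a) * (j - a) + (\<psi> (a+1) - \<psi> a)" using e1 e2 by linarith
      also have "\<dots> = \<psi> a + (\<psi> (a+1) - \<psi> a) * (j + 1 - a)" by (simp add: algebra_simps)
      finally show "\<psi> (j+1) = \<psi> a + (\<psi> (a+1) - \<psi> a) * (j + 1 - a)" .
    qed
  qed
  then show ?thesis using ai ib by blast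
qed


locale tsetting = group G for G :: "('g, 'b) monoid_scheme" (structure) +
  fixes V :: "'v set" and E :: "'v \<Rightarrow> 'v \<Rightarrow> bool"
    and phi :: "'g \<Rightarrow> 'v \<Rightarrow> 'v" and l :: "int \<Rightarrow> 'v"
  assumes tree: "is_tree V E"
    and act: "tree_action G V E phi"
    and noinv: "without_inversions G E phi"
    and line: "geodesic_line V E l"
    and condi: "\<forall>x\<in>V. \<forall>y\<in>V. \<exists>g\<in>carrier G. segment E (phi g x) (phi g y) \<subseteq> range l"
    and condii: "\<forall>i j. \<exists>h\<in>setwise_stabilizer G phi (range l).
               phi h ` {l i, l (i + 1)} = {l j, l (j + 1)}"
begin

abbreviation "H \<equiv> setwise_stabilizer G phi (range l)"

lemma E_V: "E x y \<Longrightarrow> x \<in> V \<and> y \<in> V \<and> E y x \<and> x \<noteq> y"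
  using tree unfolding is_tree_def by blast

lemma uniq: "x \<in> V \<Longrightarrow> y \<in> V \<Longrightarrow> is_path E p x y \<Longrightarrow> is_path E q x y \<Longrightarrow> p = q"
  using tree unfolding is_tree_def by blast

lemma l_inj: "inj l" using line unfolding geodesic_line_def by blast
lemma l_V: "l i \<in> V" using line unfolding geodesic_line_def by blast
lemma l_E: "E (l i) (l (i+1))" using line unfolding geodesic_line_def by blast
lemma l_eq[simp]: "l i = l j \<longleftrightarrow> i = j" using l_inj by (auto dest: injD)

lemma phiV: "g \<in> carrier G \<Longrightarrow> x \<in> V \<Longrightarrow> phi g x \<in> V"
  using act unfolding tree_action_def bij_betw_def by blast
lemma phi_inj: "g \<in> carrier G \<Longrightarrow> inj_on (phi g) V"
  using act unfolding tree_action_def bij_betw_def by blast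
lemma phi_img: "g \<in> carrier G \<Longrightarrow> phi g ` V = V"
  using act unfolding tree_action_def bij_betw_def by blast
lemma phiE: "g \<in> carrier G \<Longrightarrow> x \<in> V \<Longrightarrow> y \<in> V \<Longrightarrow> E (phi g x) (phi g y) \<longleftrightarrow> E x y"
  using act unfolding tree_action_def by blast
lemma phi_one: "x \<in> V \<Longrightarrow> phi \<one> x = x"
  using act unfolding tree_action_def by blast
lemma phi_mult: "g \<in> carrier G \<Longrightarrow> h \<in> carrier G \<Longrightarrow> x \<in> V \<Longrightarrow> phi (g \<otimes> h) x = phi g (phi h x)"
  using act unfolding tree_action_def by blast
lemma phi_inv1: "g \<in> carrier G \<Longrightarrow> x \<in> V \<Longrightarrow> phi (inv g) (phi g x) = x"
  using phi_mult[of "inv g" g x] phi_one[of x] by simp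
lemma phi_inv2: "g \<in> carrier G \<Longrightarrow> x \<in> V \<Longrightarrow> phi g (phi (inv g) x) = x"
  using phi_mult[of g "inv g" x] phi_one[of x] by simp
lemma phi_eq: "g \<in> carrier G \<Longrightarrow> x \<in> V \<Longrightarrow> y \<in> V \<Longrightarrow> phi g x = phi g y \<longleftrightarrow> x = y"
  using phi_inj unfolding inj_on_def by blast

lemma L_V: "range l \<subseteq> V" using l_V by blast

lemma H_carrier: "h \<in> H \<Longrightarrow> h \<in> carrier G" unfolding setwise_stabilizer_def by blast
lemma H_img: "h \<in> H \<Longrightarrow> phi h ` range l = range l" unfolding setwise_stabilizer_def by blast
lemma H_mult: "h1 \<in> H \<Longrightarrow> h2 \<in> H \<Longrightarrow> h1 \<otimes> h2 \<in> H"
proof -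
  assume a: "h1 \<in> H" "h2 \<in> H"
  have "phi (h1 \<otimes> h2) ` range l = phi h1 ` phi h2 ` range l"
  proof -
    have "\<forall>x\<in>range l. phi (h1 \<otimes> h2) x = phi h1 (phi h2 x)"
      using phi_mult[OF H_carrier[OF a(1)] H_carrier[OF a(2)]] L_V by blast
    then have "phi (h1 \<otimes> h2) ` range l = (\<lambda>x. phi h1 (phi h2 x)) ` range l" by (intro image_cong) auto
    then show ?thesis by (simp add: image_image)
  qed
  also have "\<dots> = range l" using H_img[OF a(1)] H_img[OF a(2)] by simp
  finally show ?thesis using a H_carrier unfolding setwise_stabilizer_def by blast
qed
lemma H_inv: "h \<in> H \<Longrightarrow> inv h \<in> H"
proof -
  assume a: "h \<in> H"
  have hc: "h \<in> carrier G" using H_carrier[OF a] .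
  have "phi (inv h) ` range l = phi (inv h) ` phi h ` range l" using H_img[OF a] by simp
  also have "\<dots> = (\<lambda>x. phi (inv h) (phi h x)) ` range l" by (simp add: image_image)
  also have "\<dots> = id ` range l" using phi_inv1[OF hc] L_V by (intro image_cong) auto
  also have "\<dots> = range l" by simp
  finally show ?thesis using hc unfolding setwise_stabilizer_def by blast
qed

lemma path_V: "is_path E p x y \<Longrightarrow> x \<in> V \<Longrightarrow> set p \<subseteq> V"
proof
  fix z assume P: "is_path E p x y" "x \<in> V" and z: "z \<in> set p"
  then obtain i where i: "i < length p" "p ! i = z" by (auto simp: in_set_conv_nth)
  show "z \<in> V"
  proof (cases i)
    case 0 then show ?thesis using P i unfolding is_path_def by (metis hd_conv_nth)
  next
    case (Suc k)
    then have "E (p ! k) (p ! Suc k)" using P i unfolding is_path_def by auto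
    then show ?thesis using E_V Suc i by blast
  qed
qed

lemma path_map:
  assumes g: "g \<in> carrier G" and P: "is_path E p x y" and x: "x \<in> V"
  shows "is_path E (map (phi g) p) (phi g x) (phi g y)"
proof -
  have pv: "set p \<subseteq> V" using path_V[OF P x] .
  have ne: "p \<noteq> []" using P unfolding is_path_def by blast
  show ?thesis unfolding is_path_def
  proof (intro conjI allI impI)
    show "map (phi g) p \<noteq> []" using ne by simp
    show "hd (map (phi g) p) = phi g x" using ne P unfolding is_path_def by (simp add: hd_map)
    show "last (map (phi g) p) = phi g y" using ne P unfolding is_path_def by (simp add: last_map)
    show "distinct (map (phi g) p)" using P pv phi_inj[OF g] unfolding is_path_def
      by (simp add: distinct_map inj_on_subset)
    fix i assume "Suc i < length (map (phi g) p)"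
    then have i: "Suc i < length p" by simp
    then have "p ! i \<in> V" "p ! Suc i \<in> V" using pv by auto
    then show "E (map (phi g) p ! i) (map (phi g) p ! Suc i)"
      using P i phiE[OF g] unfolding is_path_def by auto
  qed
qed

lemma seg_img: "g \<in> carrier G \<Longrightarrow> x \<in> V \<Longrightarrow> phi g ` segment E x y \<subseteq> segment E (phi g x) (phi g y)"
  unfolding segment_def using path_map by fastforce

definition cpath :: "int \<Rightarrow> nat \<Rightarrow> 'v list" where
  "cpath a m = map (\<lambda>k. l (a + int k)) [0..<Suc m]"
definition rpath :: "int \<Rightarrow> nat \<Rightarrow> 'v list" where
  "rpath a m = map (\<lambda>k. l (a - int k)) [0..<Suc m]"

lemma cpath_path: "is_path E (cpath a m) (l a) (l (a + int m))"
  unfolding is_path_def cpath_def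
proof (intro conjI allI impI)
  show "distinct (map (\<lambda>k. l (a + int k)) [0..<Suc m])"
    by (simp add: distinct_map inj_on_def del: upt_Suc)
  fix i assume "Suc i < length (map (\<lambda>k. l (a + int k)) [0..<Suc m])"
  then have "Suc i < Suc m" by simp
  then show "E (map (\<lambda>k. l (a + int k)) [0..<Suc m] ! i) (map (\<lambda>k. l (a + int k)) [0..<Suc m] ! Suc i)"
    using l_E[of "a + int i"] by (simp add: nth_append algebra_simps del: upt_Suc)
qed (auto simp: last_map hd_map simp del: upt_Suc)

lemma rpath_path: "is_path E (rpath a m) (l a) (l (a - int m))"
  unfolding is_path_def rpath_def
proof (intro conjI allI impI)
  show "distinct (map (\<lambda>k. l (a - int k)) [0..<Suc m])"
    by (simp add: distinct_map inj_on_def del: upt_Suc)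
  fix i assume "Suc i < length (map (\<lambda>k. l (a - int k)) [0..<Suc m])"
  then have "Suc i < Suc m" by simp
  moreover have "E (l (a - int (Suc i) + 1)) (l (a - int (Suc i)))" using l_E[of "a - int (Suc i)"] E_V by blast
  ultimately show "E (map (\<lambda>k. l (a - int k)) [0..<Suc m] ! i) (map (\<lambda>k. l (a - int k)) [0..<Suc m] ! Suc i)"
    by (simp del: upt_Suc)
qed (auto simp: last_map hd_map simp del: upt_Suc)

lemma set_cpath: "set (cpath a m) = l ` {a..a + int m}"
proof -
  have "set (cpath a m) = (\<lambda>k. l (a + int k)) ` {0..<Suc m}" unfolding cpath_def by (simp del: upt_Suc)
  also have "\<dots> = l ` {a..a + int m}"
  proof
    show "(\<lambda>k. l (a + int k)) ` {0..<Suc m} \<subseteq> l ` {a..a + int m}" by auto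
    show "l ` {a..a + int m} \<subseteq> (\<lambda>k. l (a + int k)) ` {0..<Suc m}"
    proof
      fix z assume "z \<in> l ` {a..a + int m}"
      then obtain i where i: "a \<le> i" "i \<le> a + int m" "z = l i" by auto
      then have "z = l (a + int (nat (i - a)))" "nat (i - a) < Suc m" by auto
      then show "z \<in> (\<lambda>k. l (a + int k)) ` {0..<Suc m}" by (intro image_eqI[of z _ "nat (i - a)"]) auto
    qed
  qed
  finally show ?thesis .
qed

lemma set_rpath: "set (rpath a m) \<subseteq> range l"
  unfolding rpath_def by auto

lemma path_L: assumes P: "is_path E p (l a) (l b)" shows "set p \<subseteq> range l"
proof (cases "a \<le> b")
  case True
  have "is_path E (cpath a (nat (b - a))) (l a) (l b)" using cpath_path[of a "nat (b-a)"] True by simp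
  then have "p = cpath a (nat (b - a))" using uniq[OF l_V l_V P] by blast
  then show ?thesis using set_cpath by auto
next
  case False
  have "is_path E (rpath a (nat (a - b))) (l a) (l b)" using rpath_path[of a "nat (a-b)"] False by simp
  then have "p = rpath a (nat (a - b))" using uniq[OF l_V l_V P] by blast
  then show ?thesis using set_rpath by auto
qed

lemma LE_aux: assumes e: "E (l p) (l q)" and pq: "p < q" shows "q = p + 1"
proof (rule ccontr)
  assume "q \<noteq> p + 1"
  then have q2: "q \<ge> p + 2" using pq by simp
  have P1: "is_path E [l p, l q] (l p) (l q)" unfolding is_path_def using e pq by auto
  have "is_path E (cpath p (nat (q - p))) (l p) (l q)" using cpath_path[of p "nat (q-p)"] pq by simp
  then have "[l p, l q] = cpath p (nat (q - p))" using uniq[OF l_V l_V P1] by blast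
  then have "length [l p, l q] = length (cpath p (nat (q - p)))" by simp
  then show False using q2 unfolding cpath_def by simp
qed

lemma LE: assumes e: "E (l p) (l q)" shows "\<bar>p - q\<bar> = 1"
proof -
  have "p \<noteq> q" using E_V[OF e] by auto
  then consider "p < q" | "q < p" by linarith
  then show ?thesis
  proof cases
    case 1 then show ?thesis using LE_aux[OF e] by simp
  next
    case 2 then show ?thesis using LE_aux[of q p] E_V[OF e] by simp
  qed
qed


lemma psi_props:
  assumes g: "g \<in> carrier G" and inL: "\<And>i. a \<le> i \<Longrightarrow> i \<le> b \<Longrightarrow> phi g (l i) \<in> range l"
  defines "\<psi> \<equiv> \<lambda>i. inv_into UNIV l (phi g (l i))"
  shows "\<And>i. a \<le> i \<Longrightarrow> i \<le> b \<Longrightarrow> phi g (l i) = l (\<psi> i)"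
    and "\<And>i. a \<le> i \<Longrightarrow> i < b \<Longrightarrow> \<bar>\<psi> (i+1) - \<psi> i\<bar> = 1"
    and "\<And>i j. a \<le> i \<Longrightarrow> i \<le> b \<Longrightarrow> a \<le> j \<Longrightarrow> j \<le> b \<Longrightarrow> \<psi> i = \<psi> j \<Longrightarrow> i = j"
proof -
  show eq: "phi g (l i) = l (\<psi> i)" if "a \<le> i" "i \<le> b" for i
    using inL[OF that] unfolding \<psi>_def by (simp add: f_inv_into_f)
  show "\<bar>\<psi> (i+1) - \<psi> i\<bar> = 1" if "a \<le> i" "i < b" for i
  proof -
    have "E (phi g (l i)) (phi g (l (i+1)))" using phiE[OF g l_V l_V] l_E by blast
    then have "E (l (\<psi> i)) (l (\<psi> (i+1)))" using eq that by simp
    then have "\<bar>\<psi> i - \<psi> (i+1)\<bar> = 1" by (rule LE)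
    then show ?thesis by arith
  qed
  show "i = j" if "a \<le> i" "i \<le> b" "a \<le> j" "j \<le> b" "\<psi> i = \<psi> j" for i j
  proof -
    have "phi g (l i) = phi g (l j)" using eq that by simp
    then show ?thesis using phi_eq[OF g l_V l_V] by simp
  qed
qed

lemma H_aff: assumes h: "h \<in> H"
  shows "\<exists>c d. (d = 1 \<or> d = -1) \<and> (\<forall>x. phi h (l x) = l (c + d * x))"
proof -
  have g: "h \<in> carrier G" using H_carrier[OF h] .
  have inL: "phi h (l i) \<in> range l" for i using H_img[OF h] by blast
  define \<psi> where "\<psi> \<equiv> \<lambda>i. inv_into UNIV l (phi h (l i))"
  have eq: "phi h (l i) = l (\<psi> i)" for i
    using inL unfolding \<psi>_def by (simp add: f_inv_into_f)
  have stp: "\<bar>\<psi> (i+1) - \<psi> i\<bar> = 1" for i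
    using psi_props(2)[OF g, of i "i+1" i] inL unfolding \<psi>_def by simp
  have inj: "\<psi> i = \<psi> j \<Longrightarrow> i = j" for i j
    using psi_props(3)[OF g, of "min i j" "max i j" i j] inL unfolding \<psi>_def by simp
  define d where "d = \<psi> 1 - \<psi> 0"
  have d: "d = 1 \<or> d = -1" using stp[of 0] unfolding d_def by auto
  have aff: "\<psi> x = \<psi> 0 + d * x" for x
  proof (cases "x \<ge> 0")
    case True
    have "\<psi> x = \<psi> 0 + (\<psi> (0+1) - \<psi> 0) * (x - 0)"
      apply (rule affine_interval[of 0 "x+1" \<psi> x])
      subgoal by (rule stp)
      subgoal for i j by (rule inj)
      using True by auto
    then show ?thesis unfolding d_def by simp
  next
    case False
    have a0: "\<psi> 0 = \<psi> x + (\<psi> (x+1) - \<psi> x) * (0 - x)"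
      apply (rule affine_interval[of x 1 \<psi>])
      subgoal by (rule stp)
      subgoal for i j by (rule inj)
      using False by auto
    have a1: "\<psi> 1 = \<psi> x + (\<psi> (x+1) - \<psi> x) * (1 - x)"
      apply (rule affine_interval[of x 1 \<psi>])
      subgoal by (rule stp)
      subgoal for i j by (rule inj)
      using False by auto
    have e: "\<psi> 1 - \<psi> 0 = \<psi> (x+1) - \<psi> x" using a0 a1 by (simp add: algebra_simps)
    have "\<psi> x = \<psi> 0 - (\<psi> (x+1) - \<psi> x) * (0 - x)" using a0 by linarith
    then show ?thesis unfolding d_def e by simp
  qed
  have "\<forall>x. phi h (l x) = l (\<psi> 0 + d * x)"
  proof
    fix x show "phi h (l x) = l (\<psi> 0 + d * x)" using eq[of x] aff[of x] by simp
  qed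
  then show ?thesis using d by blast
qed

definition aff :: "int \<Rightarrow> int \<Rightarrow> bool" where
  "aff c d \<longleftrightarrow> (\<exists>h\<in>H. \<forall>x. phi h (l x) = l (c + d * x))"

lemma aff_comp: "aff c1 d1 \<Longrightarrow> aff c2 d2 \<Longrightarrow> aff (c1 + d1 * c2) (d1 * d2)"
proof -
  assume "aff c1 d1" "aff c2 d2"
  then obtain h1 h2 where h: "h1 \<in> H" "h2 \<in> H" "\<forall>x. phi h1 (l x) = l (c1 + d1 * x)"
     "\<forall>x. phi h2 (l x) = l (c2 + d2 * x)" unfolding aff_def by blast
  have "phi (h1 \<otimes> h2) (l x) = l (c1 + d1 * c2 + d1 * d2 * x)" for x
    using phi_mult[OF H_carrier[OF h(1)] H_carrier[OF h(2)] l_V] h by (simp add: algebra_simps)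
  then show ?thesis unfolding aff_def using H_mult[OF h(1) h(2)] by blast
qed

lemma aff_inv: "aff c d \<Longrightarrow> d = 1 \<or> d = -1 \<Longrightarrow> aff (- d * c) d"
proof -
  assume a: "aff c d" and d: "d = 1 \<or> d = -1"
  then obtain h where h: "h \<in> H" "\<forall>x. phi h (l x) = l (c + d * x)" unfolding aff_def by blast
  have hc: "h \<in> carrier G" using H_carrier[OF h(1)] .
  have "phi (inv h) (l y) = l (- d * c + d * y)" for y
  proof -
    have "l y = phi h (l (- d * c + d * y))" using h(2) d by (auto simp: algebra_simps)
    then have "phi (inv h) (l y) = phi (inv h) (phi h (l (- d * c + d * y)))" by simp
    also have "\<dots> = l (- d * c + d * y)" using phi_inv1[OF hc l_V] .
    finally show ?thesis .
  qed
  then show ?thesis unfolding aff_def using H_inv[OF h(1)] by blast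
qed

lemma inversion: "g \<in> carrier G \<Longrightarrow> phi g (l x) = l (x + 1) \<Longrightarrow> phi g (l (x+1)) = l x \<Longrightarrow> False"
  using noinv l_E[of x] unfolding without_inversions_def by blast

lemma aff_noinv: "aff c (-1) \<Longrightarrow> odd c \<Longrightarrow> False"
proof -
  assume "aff c (-1)" "odd c"
  then obtain h where h: "h \<in> H" "\<forall>x. phi h (l x) = l (c + - 1 * x)" unfolding aff_def by blast
  obtain x where x: "c = 2 * x + 1" using \<open>odd c\<close> by (metis oddE)
  show False using inversion[OF H_carrier[OF h(1)], of x] h(2) x by simp
qed

lemma aff_ii: "aff j 1 \<or> aff (j+1) (-1)"
proof -
  obtain h where h: "h \<in> H" "phi h ` {l 0, l (0 + 1)} = {l j, l (j + 1)}" using condii by blast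
  obtain c d where cd: "d = 1 \<or> d = -1" "\<forall>x. phi h (l x) = l (c + d * x)" using H_aff[OF h(1)] by blast
  have "{l c, l (c + d)} = {l j, l (j+1)}" using h(2) cd(2) by simp
  then have "(c = j \<and> c + d = j + 1) \<or> (c = j + 1 \<and> c + d = j)" by (auto simp: doubleton_eq_iff)
  then have "(c = j \<and> d = 1) \<or> (c = j + 1 \<and> d = -1)" by auto
  then show ?thesis using h(1) cd(2) unfolding aff_def by blast
qed

lemma aff_even: "even m \<Longrightarrow> aff m 1"
  using aff_ii[of m] aff_noinv[of "m+1"] by auto

lemma inv_k: "aff e \<delta> \<Longrightarrow> k \<in> carrier G \<Longrightarrow> phi k (l a) = l p \<Longrightarrow> phi k (l (a+1)) = l q
   \<Longrightarrow> e + \<delta> * p = a + 1 \<Longrightarrow> e + \<delta> * q = a \<Longrightarrow> False"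
proof -
  assume a: "aff e \<delta>" "k \<in> carrier G" "phi k (l a) = l p" "phi k (l (a+1)) = l q"
     "e + \<delta> * p = a + 1" "e + \<delta> * q = a"
  then obtain h where h: "h \<in> H" "\<forall>x. phi h (l x) = l (e + \<delta> * x)" unfolding aff_def by blast
  have hc: "h \<in> carrier G" using H_carrier[OF h(1)] .
  show False
    using inversion[of "h \<otimes> k" a] phi_mult[OF hc a(2) l_V] a h hc by simp
qed

lemma HL: assumes k: "k \<in> carrier G" and d: "d = 1 \<or> d = -1"
  and ka: "phi k (l a) = l (c + d * a)" and ka1: "phi k (l (a+1)) = l (c + d * (a+1))"
  shows "aff c d"
proof (cases "d = 1")
  case d1: True
  show ?thesis
  proof (cases "even c")
    case True then show ?thesis using aff_even d1 by simp
  next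
    case False
    have "aff c 1 \<or> aff (c+1) (-1)" by (rule aff_ii)
    then show ?thesis
    proof
      assume "aff c 1" then show ?thesis using d1 by simp
    next
      assume r: "aff (c+1) (-1)"
      have "aff (2*a + 1 * (c+1)) (1 * -1)" by (rule aff_comp[OF aff_even r]) simp
      then have "aff (2*a + c + 1) (-1)" by (simp add: algebra_simps)
      from inv_k[OF this k ka ka1] d1 show ?thesis by simp
    qed
  qed
next
  case False
  then have d1: "d = -1" using d by simp
  show ?thesis
  proof (cases "even c")
    case False
    have "aff (2*a + 1 - c) 1" using False by (intro aff_even) simp
    from inv_k[OF this k ka ka1] d1 show ?thesis by simp
  next
    case True
    have "aff (c - 1 + 1) (-1) \<or> aff (c-1) 1" using aff_ii[of "c-1"] by blast
    then show ?thesis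
    proof
      assume "aff (c - 1 + 1) (-1)" then show ?thesis using d1 by simp
    next
      assume t: "aff (c-1) 1"
      have "aff (2*a + 2 - 2*c + 1 * (c - 1)) (1 * 1)" by (rule aff_comp[OF aff_even t]) simp
      then have "aff (2*a + 1 - c) 1" by (simp add: algebra_simps)
      from inv_k[OF this k ka ka1] d1 show ?thesis by simp
    qed
  qed
qed


lemma SPL: assumes k: "k \<in> carrier G" and ka: "phi k (l a) = l a'"
  shows "\<exists>c d. aff c d \<and> c + d * a = a'"
proof -
  define y where "y = phi k (l (a+1))"
  have Ey: "E (l a') y" using phiE[OF k l_V[of a] l_V[of "a+1"]] l_E[of a] ka unfolding y_def by simp
  have yV: "y \<in> V" using E_V[OF Ey] by blast
  show ?thesis
  proof (cases "y \<in> range l")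
    case True
    then obtain q where q: "y = l q" by blast
    have aq: "\<bar>a' - q\<bar> = 1" using LE Ey q by simp
    define d where "d = q - a'"
    have d: "d = 1 \<or> d = -1" using aq unfolding d_def by arith
    have "aff (a' - d*a) d"
      by (rule HL[OF k d, where a=a]) (use ka q y_def d_def in \<open>simp_all add: algebra_simps\<close>)
    then show ?thesis by (intro exI[of _ "a' - d*a"] exI[of _ d]) simp
  next
    case False
    define x0 where "x0 = l (a' - 1)"
    have x0V: "x0 \<in> V" unfolding x0_def by (rule l_V)
    have P: "is_path E [x0, l a', y] x0 y"
      unfolding is_path_def
    proof (intro conjI allI impI)
      show "distinct [x0, l a', y]" using False unfolding x0_def by auto
      fix i assume "Suc i < length [x0, l a', y]"
      then have "i = 0 \<or> i = 1" by auto
      then show "E ([x0, l a', y] ! i) ([x0, l a', y] ! Suc i)"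
        using l_E[of "a' - 1"] Ey unfolding x0_def by auto
    qed auto
    obtain g' where g': "g' \<in> carrier G" "segment E (phi g' x0) (phi g' y) \<subseteq> range l"
      using condi x0V yV by blast
    have "set (map (phi g') [x0, l a', y]) \<subseteq> segment E (phi g' x0) (phi g' y)"
      using path_map[OF g'(1) P x0V] unfolding segment_def by blast
    then have inL: "phi g' x0 \<in> range l" "phi g' (l a') \<in> range l" "phi g' y \<in> range l" using g'(2) by auto
    then obtain p0 p1 p2 where p: "phi g' x0 = l p0" "phi g' (l a') = l p1" "phi g' y = l p2" by blast
    have E01: "E (l p0) (l p1)" using p phiE[OF g'(1) x0V l_V[of a']] l_E[of "a'-1"] unfolding x0_def by auto
    have E12: "E (l p1) (l p2)" using p phiE[OF g'(1) l_V[of a'] yV] Ey by auto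
    define d1 where "d1 = p1 - p0"
    define d2 where "d2 = p2 - p1"
    have d1: "d1 = 1 \<or> d1 = -1" using LE[OF E01] unfolding d1_def by arith
    have d2: "d2 = 1 \<or> d2 = -1" using LE[OF E12] unfolding d2_def by arith
    have A1: "aff (p0 - d1*(a'-1)) d1"
      by (rule HL[OF g'(1) d1, where a="a'-1"]) (use p x0_def d1_def in \<open>simp_all add: algebra_simps\<close>)
    have k2: "g' \<otimes> k \<in> carrier G" using g'(1) k by simp
    have A2: "aff (p1 - d2*a) d2"
      by (rule HL[OF k2 d2, where a=a]) (use p ka y_def d2_def phi_mult[OF g'(1) k l_V, of a] phi_mult[OF g'(1) k l_V, of "a+1"] in \<open>simp_all add: algebra_simps\<close>)
    have A3: "aff (- d1 * (p0 - d1*(a'-1))) d1" using aff_inv[OF A1 d1] .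
    have A4: "aff (- d1 * (p0 - d1*(a'-1)) + d1 * (p1 - d2*a)) (d1 * d2)" using aff_comp[OF A3 A2] .
    have "- d1 * (p0 - d1*(a'-1)) + d1 * (p1 - d2*a) + d1 * d2 * a = a'"
      using d1
    proof
      assume h1: "d1 = 1" show ?thesis using d1_def h1 by (simp add: algebra_simps)
    next
      assume h1: "d1 = -1" show ?thesis using d1_def h1 by (simp add: algebra_simps)
    qed
    then show ?thesis using A4 by blast
  qed
qed

lemma KL: assumes ys: "ys \<in> tuples n (range l)" and k: "k \<in> carrier G"
    and kys: "set (map (phi k) ys) \<subseteq> range l"
  shows "\<exists>h\<in>H. \<forall>y\<in>set ys. phi h y = phi k y"
proof -
  define S where "S = l -` set ys"
  have fin: "finite S" unfolding S_def using finite_vimageI[OF finite_set l_inj] .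
  have ysL: "set ys \<subseteq> range l" and len: "length ys = Suc n" using ys unfolding tuples_def by auto
  have ne: "S \<noteq> {}" using len ysL unfolding S_def by (cases ys) auto
  define a where "a = Min S"
  define b where "b = Max S"
  have aS: "a \<in> S" and bS: "b \<in> S" using fin ne unfolding a_def b_def by auto
  have ab: "a \<le> b" using fin ne unfolding a_def b_def by auto
  have rng: "\<exists>i. a \<le> i \<and> i \<le> b \<and> y = l i" if yy: "y \<in> set ys" for y
  proof -
    obtain i where i: "y = l i" using ysL yy by blast
    then have "i \<in> S" unfolding S_def using yy by simp
    then show ?thesis using i fin unfolding a_def b_def by auto
  qed
  have laS: "l a \<in> set ys" and lbS: "l b \<in> set ys" using aS bS unfolding S_def by auto
  obtain a' where a': "phi k (l a) = l a'" using kys laS by auto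
  obtain b' where b': "phi k (l b) = l b'" using kys lbS by auto
  show ?thesis
  proof (cases "a = b")
    case True
    obtain c d where cd: "aff c d" "c + d * a = a'" using SPL[OF k a'] by blast
    then obtain h where h: "h \<in> H" "\<forall>x. phi h (l x) = l (c + d * x)" unfolding aff_def by blast
    have "\<forall>y\<in>set ys. phi h y = phi k y"
    proof
      fix y assume "y \<in> set ys"
      then obtain i where "a \<le> i" "i \<le> b" "y = l i" using rng by blast
      then have "y = l a" using True by simp
      then show "phi h y = phi k y" using h(2) cd(2) a' by simp
    qed
    then show ?thesis using h(1) by blast
  next
    case False
    then have ab': "a < b" using ab by simp
    define m where "m = nat (b - a)"
    have bm: "a + int m = b" unfolding m_def using ab by simp
    have Q: "is_path E (cpath a m) (l a) (l b)" using cpath_path[of a m] bm by simp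
    have kQ: "is_path E (map (phi k) (cpath a m)) (l a') (l b')"
      using path_map[OF k Q l_V] a' b' by simp
    have sL: "set (map (phi k) (cpath a m)) \<subseteq> range l" by (rule path_L[OF kQ])
    have inL: "phi k (l i) \<in> range l" if "a \<le> i" "i \<le> b" for i
    proof -
      have "l i \<in> set (cpath a m)" unfolding set_cpath bm using that by auto
      then show ?thesis using sL by auto
    qed
    define \<psi> where "\<psi> \<equiv> \<lambda>i. inv_into UNIV l (phi k (l i))"
    have eq: "phi k (l i) = l (\<psi> i)" if "a \<le> i" "i \<le> b" for i
      using psi_props(1)[OF k inL that] unfolding \<psi>_def by simp
    have stp: "\<bar>\<psi> (i+1) - \<psi> i\<bar> = 1" if "a \<le> i" "i < b" for i
      using psi_props(2)[OF k inL that] unfolding \<psi>_def by simp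
    have inj: "i = j" if "a \<le> i" "i \<le> b" "a \<le> j" "j \<le> b" "\<psi> i = \<psi> j" for i j
      using psi_props(3)[OF k inL that(1-4)] that(5) unfolding \<psi>_def by simp
    have affi: "\<psi> i = \<psi> a + (\<psi> (a+1) - \<psi> a) * (i - a)" if "a \<le> i" "i \<le> b" for i
      apply (rule affine_interval[of a b \<psi> i])
      subgoal by (rule stp)
      subgoal for i j by (rule inj)
      using that by auto
    define d where "d = \<psi> (a+1) - \<psi> a"
    have d: "d = 1 \<or> d = -1" using stp[of a] ab' unfolding d_def by arith
    have A: "aff (\<psi> a - d * a) d"
      by (rule HL[OF k d, where a=a]) (use eq[of a] eq[of "a+1"] ab' d_def in \<open>simp_all add: algebra_simps\<close>)
    then obtain h where h: "h \<in> H" "\<forall>x. phi h (l x) = l (\<psi> a - d * a + d * x)" unfolding aff_def by blast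
    have "\<forall>y\<in>set ys. phi h y = phi k y"
    proof
      fix y assume "y \<in> set ys"
      then obtain i where i: "a \<le> i" "i \<le> b" "y = l i" using rng by blast
      have "\<psi> a - d * a + d * i = \<psi> i" using affi[OF i(1,2)] unfolding d_def by (simp add: algebra_simps)
      then show "phi h y = phi k y" using h(2) eq[OF i(1,2)] i(3) by simp
    qed
    then show ?thesis using h(1) by blast
  qed
qed


lemma tuples_V: "xs \<in> tuples n V \<Longrightarrow> set xs \<subseteq> V" unfolding tuples_def by blast
lemma tuples_LV: "xs \<in> tuples n (range l) \<Longrightarrow> xs \<in> tuples n V" unfolding tuples_def using L_V by blast

lemma tuples_map: "g \<in> carrier G \<Longrightarrow> xs \<in> tuples n V \<Longrightarrow> map (phi g) xs \<in> tuples n V"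
  unfolding tuples_def using phiV by auto

lemma tuples_mapL: "set (map (phi g) xs) \<subseteq> range l \<Longrightarrow> xs \<in> tuples n V \<Longrightarrow> map (phi g) xs \<in> tuples n (range l)"
  unfolding tuples_def by auto

lemma aligned_ex: assumes "aligned E V xs" shows "\<exists>g\<in>carrier G. set (map (phi g) xs) \<subseteq> range l"
proof -
  obtain a b where ab: "a \<in> V" "b \<in> V" "set xs \<subseteq> segment E a b" using assms unfolding aligned_def by blast
  obtain g where g: "g \<in> carrier G" "segment E (phi g a) (phi g b) \<subseteq> range l" using condi ab by blast
  have "set (map (phi g) xs) \<subseteq> phi g ` segment E a b" using ab by auto
  also have "\<dots> \<subseteq> segment E (phi g a) (phi g b)" by (rule seg_img[OF g(1) ab(1)])
  finally show ?thesis using g by blast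
qed

lemma aligned_map: assumes g: "g \<in> carrier G" and al: "aligned E V xs" shows "aligned E V (map (phi g) xs)"
proof -
  obtain a b where ab: "a \<in> V" "b \<in> V" "set xs \<subseteq> segment E a b" using al unfolding aligned_def by blast
  have "set (map (phi g) xs) \<subseteq> phi g ` segment E a b" using ab by auto
  also have "\<dots> \<subseteq> segment E (phi g a) (phi g b)" by (rule seg_img[OF g ab(1)])
  finally show ?thesis unfolding aligned_def using phiV[OF g ab(1)] phiV[OF g ab(2)] by blast
qed

lemma aligned_map_iff: assumes g: "g \<in> carrier G" and xs: "set xs \<subseteq> V"
  shows "aligned E V (map (phi g) xs) \<longleftrightarrow> aligned E V xs"
proof
  assume a: "aligned E V (map (phi g) xs)"
  have "aligned E V (map (phi (inv g)) (map (phi g) xs))" by (rule aligned_map[OF inv_closed[OF g] a])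
  moreover have "map (phi (inv g)) (map (phi g) xs) = xs" using phi_inv1[OF g] xs by (induct xs) auto
  ultimately show "aligned E V xs" by simp
qed (rule aligned_map[OF g])

lemma L_aligned: assumes ys: "ys \<in> tuples n (range l)" shows "aligned E V ys"
proof -
  define S where "S = l -` set ys"
  have fin: "finite S" unfolding S_def using finite_vimageI[OF finite_set l_inj] .
  have ysL: "set ys \<subseteq> range l" and len: "length ys = Suc n" using ys unfolding tuples_def by auto
  have ne: "S \<noteq> {}" using len ysL unfolding S_def by (cases ys) auto
  define a where "a = Min S"
  define b where "b = Max S"
  have ab: "a \<le> b" using fin ne unfolding a_def b_def by auto
  define m where "m = nat (b - a)"
  have bm: "a + int m = b" unfolding m_def using ab by simp
  have Q: "is_path E (cpath a m) (l a) (l b)" using cpath_path[of a m] bm by simp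
  have "set ys \<subseteq> set (cpath a m)"
  proof
    fix y assume yy: "y \<in> set ys"
    obtain i where i: "y = l i" using ysL yy by blast
    then have "i \<in> S" unfolding S_def using yy by simp
    then have "a \<le> i" "i \<le> b" using fin unfolding a_def b_def by auto
    then show "y \<in> set (cpath a m)" unfolding set_cpath bm using i by auto
  qed
  also have "\<dots> \<subseteq> segment E (l a) (l b)" unfolding segment_def using Q by blast
  finally show ?thesis unfolding aligned_def using l_V by blast
qed

lemma perm_tuple:
  assumes xs: "xs \<in> tuples n X" and s: "\<sigma> permutes {..<Suc n}"
  shows "set (map (\<lambda>i. xs ! \<sigma> i) [0..<Suc n]) = set xs"
    and "map (\<lambda>i. xs ! \<sigma> i) [0..<Suc n] \<in> tuples n X"
    and "map f (map (\<lambda>i. xs ! \<sigma> i) [0..<Suc n]) = map (\<lambda>i. (map f xs) ! \<sigma> i) [0..<Suc n]"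
proof -
  have len: "length xs = Suc n" using xs unfolding tuples_def by blast
  have "set (map (\<lambda>i. xs ! \<sigma> i) [0..<Suc n]) = (\<lambda>i. xs ! i) ` (\<sigma> ` {..<Suc n})"
    by (auto simp del: upt_Suc simp add: lessThan_atLeast0)
  also have "\<dots> = (\<lambda>i. xs ! i) ` {..<Suc n}" using permutes_image[OF s] by simp
  also have "\<dots> = set xs" using len by (auto simp: set_conv_nth)
  finally show st: "set (map (\<lambda>i. xs ! \<sigma> i) [0..<Suc n]) = set xs" .
  show "map (\<lambda>i. xs ! \<sigma> i) [0..<Suc n] \<in> tuples n X"
    using st xs unfolding tuples_def by (simp del: upt_Suc)
  have "\<sigma> i < Suc n" if "i < Suc n" for i using permutes_in_image[OF s, of i] that by simp
  then show "map f (map (\<lambda>i. xs ! \<sigma> i) [0..<Suc n]) = map (\<lambda>i. (map f xs) ! \<sigma> i) [0..<Suc n]"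
    using len by (simp del: upt_Suc)
qed

lemma aligned_set: "set xs = set ys \<Longrightarrow> aligned E V xs \<longleftrightarrow> aligned E V ys"
  unfolding aligned_def by simp

lemma KC:
  assumes F: "F \<in> linf_alt_inv n (range l) H phi" and xs: "xs \<in> tuples n V"
    and g1: "g1 \<in> carrier G" "set (map (phi g1) xs) \<subseteq> range l"
    and g2: "g2 \<in> carrier G" "set (map (phi g2) xs) \<subseteq> range l"
  shows "F (map (phi g1) xs) = F (map (phi g2) xs)"
proof -
  define ys where "ys = map (phi g1) xs"
  have ys: "ys \<in> tuples n (range l)" unfolding ys_def by (rule tuples_mapL[OF g1(2) xs])
  define k where "k = g2 \<otimes> inv g1"
  have k: "k \<in> carrier G" unfolding k_def using g1 g2 by simp
  have xV: "set xs \<subseteq> V" using tuples_V[OF xs] .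
  have mk: "map (phi k) ys = map (phi g2) xs"
  proof -
    have "phi k (phi g1 x) = phi g2 x" if "x \<in> V" for x
      unfolding k_def using phi_mult[OF g2(1) inv_closed[OF g1(1)] phiV[OF g1(1) that]] phi_inv1[OF g1(1) that] by simp
    then show ?thesis unfolding ys_def using xV by (induct xs) auto
  qed
  have "set (map (phi k) ys) \<subseteq> range l" using mk g2(2) by simp
  then obtain h where h: "h \<in> H" "\<forall>y\<in>set ys. phi h y = phi k y" using KL[OF ys k] by blast
  have hk: "map (phi h) ys = map (phi k) ys" using h(2) by (intro map_cong) auto
  have "F (map (phi h) ys) = F ys" using F h(1) ys unfolding linf_alt_inv_def invariant_def by blast
  then have "F ys = F (map (phi g2) xs)" using hk mk by simp
  then show ?thesis unfolding ys_def .
qed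

definition ext :: "nat \<Rightarrow> ('v list \<Rightarrow> real) \<Rightarrow> 'v list \<Rightarrow> real" where
  "ext n F xs = (if xs \<in> tuples n V \<and> aligned E V xs
     then F (map (phi (SOME g. g \<in> carrier G \<and> set (map (phi g) xs) \<subseteq> range l)) xs) else 0)"

lemma FV:
  assumes F: "F \<in> linf_alt_inv n (range l) H phi" and xs: "xs \<in> tuples n V" and al: "aligned E V xs"
    and g: "g \<in> carrier G" "set (map (phi g) xs) \<subseteq> range l"
  shows "ext n F xs = F (map (phi g) xs)"
proof -
  define g0 where "g0 = (SOME g. g \<in> carrier G \<and> set (map (phi g) xs) \<subseteq> range l)"
  have g0: "g0 \<in> carrier G \<and> set (map (phi g0) xs) \<subseteq> range l"
    unfolding g0_def by (rule someI_ex) (use aligned_ex[OF al] in blast)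
  have "ext n F xs = F (map (phi g0) xs)" unfolding ext_def g0_def using xs al by simp
  also have "\<dots> = F (map (phi g) xs)" using KC[OF F xs _ _ g] g0 by blast
  finally show ?thesis .
qed

lemma ext_in:
  assumes F: "F \<in> linf_alt_inv n (range l) H phi"
  shows "ext n F \<in> linf_aligned_inv n V E (carrier G) phi"
    and "restrict_tuples n (range l) (ext n F) = F"
proof -
  have Fz: "\<And>xs. xs \<notin> tuples n (range l) \<Longrightarrow> F xs = 0" using F unfolding linf_alt_inv_def by blast
  obtain C where C: "\<And>x. \<bar>F x\<bar> \<le> C" using F unfolding linf_alt_inv_def bounded_fun_def by blast
  have Falt: "alternating n (range l) F" using F unfolding linf_alt_inv_def by blast
  have z: "\<forall>xs. xs \<notin> tuples n V \<longrightarrow> ext n F xs = 0" unfolding ext_def by simp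
  have bd: "bounded_fun (ext n F)" unfolding bounded_fun_def ext_def
  proof -
    have C0: "0 \<le> C" using C[of "[]"] abs_ge_zero[of "F []"] by linarith
    show "\<exists>C. \<forall>x. \<bar>if x \<in> tuples n V \<and> aligned E V x then F (map (phi (SOME g. g \<in> carrier G \<and> set (map (phi g) x) \<subseteq> range l)) x) else 0\<bar> \<le> C"
      using C C0 by (intro exI[of _ C]) auto
  qed
  have sup: "\<forall>xs\<in>tuples n V. ext n F xs \<noteq> 0 \<longrightarrow> aligned E V xs" unfolding ext_def by auto
  have alt: "alternating n V (ext n F)" unfolding alternating_def
  proof (intro ballI allI impI)
    fix xs \<sigma> assume xs: "xs \<in> tuples n V" and s: "\<sigma> permutes {..<Suc n}"
    define xs' where "xs' = map (\<lambda>i. xs ! \<sigma> i) [0..<Suc n]"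
    have st: "set xs' = set xs" and xs': "xs' \<in> tuples n V" using perm_tuple[OF xs s] unfolding xs'_def by auto
    show "ext n F xs' = of_int (sign \<sigma>) * ext n F xs"
    proof (cases "aligned E V xs")
      case True
      obtain g where g: "g \<in> carrier G" "set (map (phi g) xs) \<subseteq> range l" using aligned_ex[OF True] by blast
      have al': "aligned E V xs'" using True aligned_set[OF st] by simp
      have g': "set (map (phi g) xs') \<subseteq> range l" using g(2) st by simp
      have ys: "map (phi g) xs \<in> tuples n (range l)" by (rule tuples_mapL[OF g(2) xs])
      have "ext n F xs' = F (map (phi g) xs')" by (rule FV[OF F xs' al' g(1) g'])
      also have "\<dots> = F (map (\<lambda>i. (map (phi g) xs) ! \<sigma> i) [0..<Suc n])"
        unfolding xs'_def perm_tuple(3)[OF xs s] ..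
      also have "\<dots> = of_int (sign \<sigma>) * F (map (phi g) xs)" using Falt ys s unfolding alternating_def by blast
      also have "F (map (phi g) xs) = ext n F xs" using FV[OF F xs True g] by simp
      finally show ?thesis .
    next
      case False
      then have "\<not> aligned E V xs'" using aligned_set[OF st] by simp
      then show ?thesis using False unfolding ext_def by simp
    qed
  qed
  have inv: "invariant n V (carrier G) phi (ext n F)" unfolding invariant_def
  proof (intro ballI)
    fix k xs assume k: "k \<in> carrier G" and xs: "xs \<in> tuples n V"
    have xV: "set xs \<subseteq> V" using tuples_V[OF xs] .
    have kxs: "map (phi k) xs \<in> tuples n V" by (rule tuples_map[OF k xs])
    show "ext n F (map (phi k) xs) = ext n F xs"
    proof (cases "aligned E V xs")
      case True
      obtain g where g: "g \<in> carrier G" "set (map (phi g) xs) \<subseteq> range l" using aligned_ex[OF True] by blast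
      define g' where "g' = g \<otimes> inv k"
      have g'c: "g' \<in> carrier G" unfolding g'_def using g k by simp
      have mm: "map (phi g') (map (phi k) xs) = map (phi g) xs"
      proof -
        have "phi g' (phi k x) = phi g x" if "x \<in> V" for x
          unfolding g'_def using phi_mult[OF g(1) inv_closed[OF k] phiV[OF k that]] phi_inv1[OF k that] by simp
        then show ?thesis using xV by (induct xs) auto
      qed
      have al: "aligned E V (map (phi k) xs)" using aligned_map[OF k True] .
      have "ext n F (map (phi k) xs) = F (map (phi g') (map (phi k) xs))"
        by (rule FV[OF F kxs al g'c]) (use mm g(2) in simp)
      also have "\<dots> = ext n F xs" unfolding mm using FV[OF F xs True g] by simp
      finally show ?thesis .
    next
      case False
      then have "\<not> aligned E V (map (phi k) xs)" using aligned_map_iff[OF k xV] by simp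
      then show ?thesis using False unfolding ext_def by simp
    qed
  qed
  show "ext n F \<in> linf_aligned_inv n V E (carrier G) phi"
    unfolding linf_aligned_inv_def using z bd alt sup inv by blast
  show "restrict_tuples n (range l) (ext n F) = F"
  proof
    fix ys show "restrict_tuples n (range l) (ext n F) ys = F ys"
    proof (cases "ys \<in> tuples n (range l)")
      case True
      have yV: "ys \<in> tuples n V" using tuples_LV[OF True] .
      have "map (phi \<one>) ys = ys" using tuples_V[OF yV] phi_one by (induct ys) auto
      then have "ext n F ys = F ys" using FV[OF F yV L_aligned[OF True] one_closed] True unfolding tuples_def by simp
      then show ?thesis using True unfolding restrict_tuples_def by simp
    next
      case False then show ?thesis using Fz unfolding restrict_tuples_def by simp
    qed
  qed
qed

lemma restrict_in:
  assumes f: "f \<in> linf_aligned_inv n V E (carrier G) phi"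
  shows "restrict_tuples n (range l) f \<in> linf_alt_inv n (range l) H phi"
proof -
  have fz: "\<And>xs. xs \<notin> tuples n V \<Longrightarrow> f xs = 0" using f unfolding linf_aligned_inv_def by blast
  obtain C where C: "\<And>x. \<bar>f x\<bar> \<le> C" using f unfolding linf_aligned_inv_def bounded_fun_def by blast
  have falt: "alternating n V f" using f unfolding linf_aligned_inv_def by blast
  have finv: "invariant n V (carrier G) phi f" using f unfolding linf_aligned_inv_def by blast
  let ?r = "restrict_tuples n (range l) f"
  have z: "\<forall>xs. xs \<notin> tuples n (range l) \<longrightarrow> ?r xs = 0" unfolding restrict_tuples_def by simp
  have bd: "bounded_fun ?r" unfolding bounded_fun_def restrict_tuples_def
  proof -
    have C0: "0 \<le> C" using C[of "[]"] abs_ge_zero[of "f []"] by linarith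
    show "\<exists>C. \<forall>x. \<bar>if x \<in> tuples n (range l) then f x else 0\<bar> \<le> C"
      using C C0 by (intro exI[of _ C]) auto
  qed
  have alt: "alternating n (range l) ?r" unfolding alternating_def
  proof (intro ballI allI impI)
    fix xs \<sigma> assume xs: "xs \<in> tuples n (range l)" and s: "\<sigma> permutes {..<Suc n}"
    have xs': "map (\<lambda>i. xs ! \<sigma> i) [0..<Suc n] \<in> tuples n (range l)" using perm_tuple(2)[OF xs s] .
    have "f (map (\<lambda>i. xs ! \<sigma> i) [0..<Suc n]) = of_int (sign \<sigma>) * f xs"
      using falt tuples_LV[OF xs] s unfolding alternating_def by blast
    then show "?r (map (\<lambda>i. xs ! \<sigma> i) [0..<Suc n]) = of_int (sign \<sigma>) * ?r xs"
      using xs xs' unfolding restrict_tuples_def by simp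
  qed
  have inv: "invariant n (range l) H phi ?r" unfolding invariant_def
  proof (intro ballI)
    fix h xs assume h: "h \<in> H" and xs: "xs \<in> tuples n (range l)"
    have "set (map (phi h) xs) \<subseteq> phi h ` range l" using xs unfolding tuples_def by auto
    then have hx: "map (phi h) xs \<in> tuples n (range l)" using xs H_img[OF h] unfolding tuples_def by simp
    have "f (map (phi h) xs) = f xs" using finv H_carrier[OF h] tuples_LV[OF xs] unfolding invariant_def by blast
    then show "?r (map (phi h) xs) = ?r xs" using hx xs unfolding restrict_tuples_def by simp
  qed
  show ?thesis unfolding linf_alt_inv_def using z bd alt inv by blast
qed

lemma restrict_inj: "inj_on (restrict_tuples n (range l)) (linf_aligned_inv n V E (carrier G) phi)"
proof (rule inj_onI)
  fix f1 f2 assume f1: "f1 \<in> linf_aligned_inv n V E (carrier G) phi" and f2: "f2 \<in> linf_aligned_inv n V E (carrier G) phi"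
    and eq: "restrict_tuples n (range l) f1 = restrict_tuples n (range l) f2"
  show "f1 = f2"
  proof
    fix xs
    show "f1 xs = f2 xs"
    proof (cases "xs \<in> tuples n V")
      case False then show ?thesis using f1 f2 unfolding linf_aligned_inv_def by simp
    next
      case xs: True
      show ?thesis
      proof (cases "f1 xs = 0 \<and> f2 xs = 0")
        case True then show ?thesis by simp
      next
        case False
        then have al: "aligned E V xs" using f1 f2 xs unfolding linf_aligned_inv_def by blast
        obtain g where g: "g \<in> carrier G" "set (map (phi g) xs) \<subseteq> range l" using aligned_ex[OF al] by blast
        have ys: "map (phi g) xs \<in> tuples n (range l)" by (rule tuples_mapL[OF g(2) xs])
        have "f1 xs = f1 (map (phi g) xs)" using f1 g(1) xs unfolding linf_aligned_inv_def invariant_def by simp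
        also have "\<dots> = restrict_tuples n (range l) f1 (map (phi g) xs)" using ys unfolding restrict_tuples_def by simp
        also have "\<dots> = restrict_tuples n (range l) f2 (map (phi g) xs)" using eq by simp
        also have "\<dots> = f2 (map (phi g) xs)" using ys unfolding restrict_tuples_def by simp
        also have "\<dots> = f2 xs" using f2 g(1) xs unfolding linf_aligned_inv_def invariant_def by simp
        finally show ?thesis .
      qed
    qed
  qed
qed

lemma main_bij: "bij_betw (restrict_tuples n (range l))
           (linf_aligned_inv n V E (carrier G) phi)
           (linf_alt_inv n (range l) (setwise_stabilizer G phi (range l)) phi)"
  unfolding bij_betw_def
proof (intro conjI)
  show "inj_on (restrict_tuples n (range l)) (linf_aligned_inv n V E (carrier G) phi)" by (rule restrict_inj)
  show "restrict_tuples n (range l) ` linf_aligned_inv n V E (carrier G) phi = linf_alt_inv n (range l) H phi"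
  proof
    show "restrict_tuples n (range l) ` linf_aligned_inv n V E (carrier G) phi \<subseteq> linf_alt_inv n (range l) H phi"
      using restrict_in by blast
    show "linf_alt_inv n (range l) H phi \<subseteq> restrict_tuples n (range l) ` linf_aligned_inv n V E (carrier G) phi"
    proof
      fix F assume F: "F \<in> linf_alt_inv n (range l) H phi"
      show "F \<in> restrict_tuples n (range l) ` linf_aligned_inv n V E (carrier G) phi"
        using ext_in[OF F] by (metis image_eqI)
    qed
  qed
qed

end

theorem mainTheorem6:
  fixes G :: "('g, 'b) monoid_scheme" (structure)
    and V :: "'v set" and E :: "'v \<Rightarrow> 'v \<Rightarrow> bool"
    and phi :: "'g \<Rightarrow> 'v \<Rightarrow> 'v" and l :: "int \<Rightarrow> 'v" and n :: nat
  assumes tree: "is_tree V E"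
    and lfr: "locally_finite_regular V E"
    and act: "tree_action G V E phi"
    and noinv: "without_inversions G E phi"
    and line: "geodesic_line V E l"
    and i: "\<forall>x\<in>V. \<forall>y\<in>V. \<exists>g\<in>carrier G. segment E (phi g x) (phi g y) \<subseteq> range l"
    and ii: "\<forall>i j. \<exists>h\<in>setwise_stabilizer G phi (range l).
               phi h ` {l i, l (i + 1)} = {l j, l (j + 1)}"
  shows "(\<forall>f g (c::real). restrict_tuples n (range l) (\<lambda>xs. f xs + c * g xs) =
            (\<lambda>xs. restrict_tuples n (range l) f xs + c * restrict_tuples n (range l) g xs)) \<and>
         bij_betw (restrict_tuples n (range l))
           (linf_aligned_inv n V E (carrier G) phi)
           (linf_alt_inv n (range l) (setwise_stabilizer G phi (range l)) phi)"
proof -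
  have grp: "group G" using act unfolding tree_action_def by blast
  interpret T: tsetting G V E phi l
    by (rule tsetting.intro[OF grp]) (unfold_locales; fact tree act noinv line i ii)
  show ?thesis
  proof (intro conjI)
    show "\<forall>f g (c::real). restrict_tuples n (range l) (\<lambda>xs. f xs + c * g xs) =
            (\<lambda>xs. restrict_tuples n (range l) f xs + c * restrict_tuples n (range l) g xs)"
      by (simp add: restrict_tuples_def fun_eq_iff)
    show "bij_betw (restrict_tuples n (range l))
           (linf_aligned_inv n V E (carrier G) phi)
           (linf_alt_inv n (range l) (setwise_stabilizer G phi (range l)) phi)"
      by (rule T.main_bij)
  qed
qed

end
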